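(* For every integral domain $D$ and semistar operation $\star$ on $D$, $$\widetilde{\star}\text{-}\dim_v(D)=\sup\{\dim(T)\mid T\text{ is a }(\star,d_T)\text{-linked overring of }D\}.$$
   Context: $D$ is an integral domain with quotient field $K$; $f(D)$ denotes nonzero finitely generated fractional ideals, $\overline{\mathcal F}(D)$ nonzero $D$-submodules of $K$. A semistar operation $\star$ on $D$ is a map $\overline{\mathcal F}(D)\to\overline{\mathcal F}(D)$ with $(xE)^\star=xE^\star$ ($0\neq x\in K$), $E\subseteq F\Rightarrow E^\star\subseteq F^\star$, $E\subseteq E^\star=(E^\star)^\star$. $E^{\star_f}:=\bigcup\{F^\star:F\in f(D),F\subseteq E\}$. A nonzero ideal $I$ is a quasi-$\star_f$-ideal if $I^{\star_f}\cap D=I$; $\operatorname{QMax}^{\star_f}(D)$ is the set of maximal proper quasi-$\star_f$-ideals. $E^{\widetilde\star}:=\bigcap\{ED_M:M\in\operatorname{QMax}^{\star_f}(D)\}$ ($=K$ if empty). A valuation overring $V$ of $D$ is a $\widetilde\star$-valuation overring if $F^{\widetilde\star}\subseteq FV$ for all $F\in f(D)$; $\widetilde\star$-$\dim_v(D):=\sup\{\dim V\}$ over $\widetilde\star$-valuation overrings. An overring $T$ of $D$ ($D\subseteq T\subseteq K$) is $(\star,d_T)$-linked to $D$ if for every nonzero finitely generated ideal $F$ of $D$ with $F^\star=D^\star$ one has $FT=T$. *)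

theory Defs
  imports Main "HOL-Library.Extended_Nat"
begin

text \<open>Ambient field K is the whole type 'a; D is a subring of K with quotient field K.\<close>

definition subring :: "'a::field set \<Rightarrow> bool" where
  "subring R \<longleftrightarrow> 0 \<in> R \<and> 1 \<in> R \<and> (\<forall>x\<in>R. \<forall>y\<in>R. x + y \<in> R \<and> x - y \<in> R \<and> x * y \<in> R)"

definition quotient_field_is_UNIV :: "'a::field set \<Rightarrow> bool" where
  "quotient_field_is_UNIV D \<longleftrightarrow> (\<forall>k. \<exists>a\<in>D. \<exists>b\<in>D. b \<noteq> 0 \<and> k = a / b)"

definition genset :: "'a::field set \<Rightarrow> 'a set \<Rightarrow> 'a set" where
  "genset E T = {x. \<exists>(n::nat) e t. x = (\<Sum>i<n. e i * t i) \<and> (\<forall>i<n. e i \<in> E \<and> t i \<in> T)}"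

definition scale :: "'a::field \<Rightarrow> 'a set \<Rightarrow> 'a set" where
  "scale x E = (\<lambda>e. x * e) ` E"

definition Fbar :: "'a::field set \<Rightarrow> 'a set set" where
  "Fbar D = {E. 0 \<in> E \<and> E \<noteq> {0} \<and> (\<forall>x\<in>E. \<forall>y\<in>E. x + y \<in> E) \<and> (\<forall>d\<in>D. \<forall>x\<in>E. d * x \<in> E)}"

definition fD :: "'a::field set \<Rightarrow> 'a set set" where
  "fD D = {F. \<exists>G. finite G \<and> F = genset G D \<and> F \<noteq> {0}}"

definition semistar :: "'a::field set \<Rightarrow> ('a set \<Rightarrow> 'a set) \<Rightarrow> bool" where
  "semistar D st \<longleftrightarrow>
     (\<forall>E\<in>Fbar D. st E \<in> Fbar D) \<and>
     (\<forall>E\<in>Fbar D. \<forall>x. x \<noteq> 0 \<longrightarrow> st (scale x E) = scale x (st E)) \<and>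
     (\<forall>E\<in>Fbar D. \<forall>F\<in>Fbar D. E \<subseteq> F \<longrightarrow> st E \<subseteq> st F) \<and>
     (\<forall>E\<in>Fbar D. E \<subseteq> st E \<and> st (st E) = st E)"

definition star_f :: "'a::field set \<Rightarrow> ('a set \<Rightarrow> 'a set) \<Rightarrow> 'a set \<Rightarrow> 'a set" where
  "star_f D st E = \<Union>{st F | F. F \<in> fD D \<and> F \<subseteq> E}"

definition quasi_star_f_ideal :: "'a::field set \<Rightarrow> ('a set \<Rightarrow> 'a set) \<Rightarrow> 'a set \<Rightarrow> bool" where
  "quasi_star_f_ideal D st I \<longleftrightarrow> I \<in> Fbar D \<and> I \<subseteq> D \<and> star_f D st I \<inter> D = I"

definition QMax :: "'a::field set \<Rightarrow> ('a set \<Rightarrow> 'a set) \<Rightarrow> 'a set set" where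
  "QMax D st = {M. quasi_star_f_ideal D st M \<and> M \<noteq> D \<and>
      (\<forall>J. quasi_star_f_ideal D st J \<and> J \<noteq> D \<and> M \<subseteq> J \<longrightarrow> J = M)}"

definition localization :: "'a::field set \<Rightarrow> 'a set \<Rightarrow> 'a set" where
  "localization D M = {a / s | a s. a \<in> D \<and> s \<in> D \<and> s \<notin> M}"

text \<open>The stable semistar operation; the intersection over an empty family is K = UNIV.\<close>
definition star_tilde :: "'a::field set \<Rightarrow> ('a set \<Rightarrow> 'a set) \<Rightarrow> 'a set \<Rightarrow> 'a set" where
  "star_tilde D st E = (\<Inter>M\<in>QMax D st. genset E (localization D M))"

definition overring :: "'a::field set \<Rightarrow> 'a set \<Rightarrow> bool" where
  "overring D T \<longleftrightarrow> subring T \<and> D \<subseteq> T"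

definition valuation_overring :: "'a::field set \<Rightarrow> 'a set \<Rightarrow> bool" where
  "valuation_overring D V \<longleftrightarrow> overring D V \<and> (\<forall>x. x \<noteq> 0 \<longrightarrow> x \<in> V \<or> inverse x \<in> V)"

definition star_tilde_valuation_overring :: "'a::field set \<Rightarrow> ('a set \<Rightarrow> 'a set) \<Rightarrow> 'a set \<Rightarrow> bool" where
  "star_tilde_valuation_overring D st V \<longleftrightarrow> valuation_overring D V \<and>
     (\<forall>F\<in>fD D. star_tilde D st F \<subseteq> genset F V)"

definition prime_ideal :: "'a::field set \<Rightarrow> 'a set \<Rightarrow> bool" where
  "prime_ideal R P \<longleftrightarrow> P \<subseteq> R \<and> 0 \<in> P \<and> P \<noteq> R \<and>
     (\<forall>x\<in>P. \<forall>y\<in>P. x + y \<in> P) \<and> (\<forall>r\<in>R. \<forall>x\<in>P. r * x \<in> P) \<and>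
     (\<forall>a\<in>R. \<forall>b\<in>R. a * b \<in> P \<longrightarrow> a \<in> P \<or> b \<in> P)"

definition krull_dim :: "'a::field set \<Rightarrow> enat" where
  "krull_dim R = Sup {enat n | n. \<exists>P. (\<forall>i\<le>n. prime_ideal R (P i)) \<and> (\<forall>i<n. P i \<subset> P (Suc i))}"

definition star_tilde_dim_v :: "'a::field set \<Rightarrow> ('a set \<Rightarrow> 'a set) \<Rightarrow> enat" where
  "star_tilde_dim_v D st = Sup {krull_dim V | V. star_tilde_valuation_overring D st V}"

definition star_linked :: "'a::field set \<Rightarrow> ('a set \<Rightarrow> 'a set) \<Rightarrow> 'a set \<Rightarrow> bool" where
  "star_linked D st T \<longleftrightarrow> overring D T \<and>
     (\<forall>F. F \<in> fD D \<and> F \<subseteq> D \<and> st F = st D \<longrightarrow> genset F T = T)"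

end

theory Submission
  imports Defs
begin


lemma subringD:
  assumes "subring R"
  shows "0 \<in> R" "1 \<in> R" "x \<in> R \<Longrightarrow> y \<in> R \<Longrightarrow> x + y \<in> R"
    "x \<in> R \<Longrightarrow> y \<in> R \<Longrightarrow> x - y \<in> R" "x \<in> R \<Longrightarrow> y \<in> R \<Longrightarrow> x * y \<in> R"
  using assms unfolding subring_def by auto

lemma subring_uminus: "subring R \<Longrightarrow> x \<in> R \<Longrightarrow> - x \<in> R"
  using subringD(4)[of R 0 x] subringD(1)[of R] by simp

lemma subring_power: "subring R \<Longrightarrow> x \<in> R \<Longrightarrow> x ^ n \<in> R"
  by (induction n) (auto intro: subringD)

lemma subring_sum: "subring R \<Longrightarrow> (\<And>i. i \<in> A \<Longrightarrow> f i \<in> R) \<Longrightarrow> sum f A \<in> R"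
  by (induction A rule: infinite_finite_induct) (auto intro: subringD)

lemma subring_UNIV: "subring UNIV" unfolding subring_def by auto

lemma genset_iff: "x \<in> genset E T \<longleftrightarrow> (\<exists>(n::nat) e t. x = (\<Sum>i<n. e i * t i) \<and> (\<forall>i<n. e i \<in> E \<and> t i \<in> T))"
  unfolding genset_def by simp

lemma gensetE:
  assumes "x \<in> genset E T"
  obtains n e t where "x = (\<Sum>i<(n::nat). e i * t i)" "\<forall>i<n. e i \<in> E \<and> t i \<in> T"
  using assms unfolding genset_iff by blast

lemma genset_zero: "0 \<in> genset E T"
  unfolding genset_def by (rule CollectI, rule exI[of _ 0]) auto

lemma genset_single: "e \<in> E \<Longrightarrow> t \<in> T \<Longrightarrow> e * t \<in> genset E T"
  unfolding genset_def
  by (rule CollectI, rule exI[of _ 1], rule exI[of _ "\<lambda>_. e"], rule exI[of _ "\<lambda>_. t"]) auto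

lemma genset_least:
  assumes "0 \<in> X" "\<And>x y. x \<in> X \<Longrightarrow> y \<in> X \<Longrightarrow> x + y \<in> X"
    "\<And>e t. e \<in> E \<Longrightarrow> t \<in> T \<Longrightarrow> e * t \<in> X"
  shows "genset E T \<subseteq> X"
proof
  fix x assume "x \<in> genset E T"
  then obtain n :: nat and e t where x: "x = (\<Sum>i<n. e i * t i)" and et: "\<forall>i<n. e i \<in> E \<and> t i \<in> T"
    by (rule gensetE)
  have "\<forall>m\<le>n. (\<Sum>i<m. e i * t i) \<in> X"
  proof (intro allI impI)
    fix m assume "m \<le> n" thus "(\<Sum>i<m. e i * t i) \<in> X"
      by (induction m) (auto simp: assms et)
  qed
  thus "x \<in> X" using x by auto
qed

lemma genset_add_one:
  assumes "x \<in> genset E T" "e0 \<in> E" "t0 \<in> T"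
  shows "x + e0 * t0 \<in> genset E T"
proof -
  obtain n :: nat and e t where x: "x = (\<Sum>i<n. e i * t i)" and et: "\<forall>i<n. e i \<in> E \<and> t i \<in> T"
    using assms(1) by (rule gensetE)
  define e' where "e' = e(n := e0)"
  define t' where "t' = t(n := t0)"
  have "(\<Sum>i<Suc n. e' i * t' i) = (\<Sum>i<n. e' i * t' i) + e0 * t0"
    by (simp add: e'_def t'_def)
  also have "(\<Sum>i<n. e' i * t' i) = (\<Sum>i<n. e i * t i)"
    by (rule sum.cong) (auto simp: e'_def t'_def)
  finally have "x + e0 * t0 = (\<Sum>i<Suc n. e' i * t' i)" using x by simp
  moreover have "\<forall>i<Suc n. e' i \<in> E \<and> t' i \<in> T"
    using et assms by (auto simp: e'_def t'_def less_Suc_eq)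
  ultimately show ?thesis unfolding genset_iff by blast
qed

lemma genset_add:
  assumes "x \<in> genset E T" "y \<in> genset E T"
  shows "x + y \<in> genset E T"
proof -
  obtain n :: nat and e t where y: "y = (\<Sum>i<n. e i * t i)" and et: "\<forall>i<n. e i \<in> E \<and> t i \<in> T"
    using assms(2) by (rule gensetE)
  have "\<forall>m\<le>n. x + (\<Sum>i<m. e i * t i) \<in> genset E T"
  proof (intro allI impI)
    fix m assume "m \<le> n" thus "x + (\<Sum>i<m. e i * t i) \<in> genset E T"
    proof (induction m)
      case 0 thus ?case using assms(1) by simp
    next
      case (Suc m)
      hence "x + (\<Sum>i<m. e i * t i) + e m * t m \<in> genset E T"
        using et by (intro genset_add_one) auto
      thus ?case by (simp add: add.assoc)
    qed
  qed
  thus ?thesis using y by auto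
qed

lemma genset_mult_right:
  assumes "x \<in> genset E T" "subring T" "s \<in> T"
  shows "x * s \<in> genset E T"
proof -
  obtain n :: nat and e t where x: "x = (\<Sum>i<n. e i * t i)" and et: "\<forall>i<n. e i \<in> E \<and> t i \<in> T"
    using assms(1) by (rule gensetE)
  have "x * s = (\<Sum>i<n. e i * (t i * s))" using x by (simp add: sum_distrib_right mult.assoc)
  moreover have "\<forall>i<n. e i \<in> E \<and> t i * s \<in> T" using et assms by (auto intro: subringD)
  ultimately show ?thesis unfolding genset_iff by (intro exI[of _ n] exI[of _ e] exI[of _ "\<lambda>i. t i * s"]) simp
qed

lemma genset_mult_left:
  "x \<in> genset E T \<Longrightarrow> subring T \<Longrightarrow> s \<in> T \<Longrightarrow> s * x \<in> genset E T"
  using genset_mult_right[of x E T s] by (simp add: mult.commute)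

lemma genset_mono: "E \<subseteq> E' \<Longrightarrow> T \<subseteq> T' \<Longrightarrow> genset E T \<subseteq> genset E' T'"
proof
  fix x assume a: "E \<subseteq> E'" "T \<subseteq> T'" "x \<in> genset E T"
  obtain n :: nat and e t where "x = (\<Sum>i<n. e i * t i)" "\<forall>i<n. e i \<in> E \<and> t i \<in> T"
    using a(3) by (rule gensetE)
  thus "x \<in> genset E' T'" using a unfolding genset_iff by blast
qed

lemma genset_sub_ring: "subring R \<Longrightarrow> E \<subseteq> R \<Longrightarrow> T \<subseteq> R \<Longrightarrow> genset E T \<subseteq> R"
  by (rule genset_least) (auto intro: subringD)

lemma genset_gen: "subring T \<Longrightarrow> e \<in> E \<Longrightarrow> e \<in> genset E T"
  using genset_single[of e E 1 T] subringD(2) by auto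

lemma genset_sub_module:
  assumes "0 \<in> X" "\<And>x y. x \<in> X \<Longrightarrow> y \<in> X \<Longrightarrow> x + y \<in> X"
    "\<And>t x. t \<in> T \<Longrightarrow> x \<in> X \<Longrightarrow> t * x \<in> X" "E \<subseteq> X"
  shows "genset E T \<subseteq> X"
proof (rule genset_least)
  fix e t assume "e \<in> E" "t \<in> T"
  thus "e * t \<in> X" using assms(3)[of t e] assms(4) by (auto simp: mult.commute)
qed (use assms in auto)

lemma genset_one_ring:
  assumes "1 \<in> genset E T" "subring T" "E \<subseteq> T"
  shows "genset E T = T"
proof
  show "genset E T \<subseteq> T" using assms by (intro genset_sub_ring) auto
  show "T \<subseteq> genset E T" using genset_mult_right[OF assms(1) assms(2)] by auto
qed

lemma genset_chain:
  assumes "C \<noteq> {}" "\<And>X Y. X \<in> C \<Longrightarrow> Y \<in> C \<Longrightarrow> X \<subseteq> Y \<or> Y \<subseteq> X"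
    "\<forall>i<(n::nat). t i \<in> \<Union>C"
  shows "\<exists>R\<in>C. \<forall>i<n. t i \<in> R"
  using assms(3)
proof (induction n)
  case 0 thus ?case using assms(1) by auto
next
  case (Suc n)
  then obtain R where R: "R \<in> C" "\<forall>i<n. t i \<in> R" by auto
  obtain R' where R': "R' \<in> C" "t n \<in> R'" using Suc.prems by auto
  show ?case
  proof (cases "R \<subseteq> R'")
    case True thus ?thesis using R R' by (intro bexI[of _ R']) (auto simp: less_Suc_eq)
  next
    case False hence "R' \<subseteq> R" using assms(2) R R' by blast
    thus ?thesis using R R' by (intro bexI[of _ R]) (auto simp: less_Suc_eq)
  qed
qed

lemma genset_Union_chain:
  assumes "C \<noteq> {}" "\<And>X Y. X \<in> C \<Longrightarrow> Y \<in> C \<Longrightarrow> X \<subseteq> Y \<or> Y \<subseteq> X"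
    "x \<in> genset E (\<Union>C)"
  shows "\<exists>R\<in>C. x \<in> genset E R"
proof -
  obtain n :: nat and e t where x: "x = (\<Sum>i<n. e i * t i)" and et: "\<forall>i<n. e i \<in> E \<and> t i \<in> \<Union>C"
    using assms(3) by (rule gensetE)
  obtain R where "R \<in> C" "\<forall>i<n. t i \<in> R" using genset_chain[OF assms(1,2)] et by blast
  thus ?thesis using x et unfolding genset_iff by blast
qed

lemma genset_Union_chain1:
  assumes "C \<noteq> {}" "\<And>X Y. X \<in> C \<Longrightarrow> Y \<in> C \<Longrightarrow> X \<subseteq> Y \<or> Y \<subseteq> X"
    "x \<in> genset (\<Union>C) T"
  shows "\<exists>R\<in>C. x \<in> genset R T"
proof -
  obtain n :: nat and e t where x: "x = (\<Sum>i<n. e i * t i)" and et: "\<forall>i<n. e i \<in> \<Union>C \<and> t i \<in> T"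
    using assms(3) by (rule gensetE)
  obtain R where "R \<in> C" "\<forall>i<n. e i \<in> R" using genset_chain[OF assms(1,2), of n e] et by blast
  thus ?thesis using x et unfolding genset_iff by blast
qed



definition valring :: "'a::field set \<Rightarrow> bool" where
  "valring V \<longleftrightarrow> subring V \<and> (\<forall>x. x \<noteq> 0 \<longrightarrow> x \<in> V \<or> inverse x \<in> V)"

definition mV :: "'a::field set \<Rightarrow> 'a set" where
  "mV V = {x \<in> V. x = 0 \<or> inverse x \<notin> V}"

lemma valuation_overring_iff: "valuation_overring D V \<longleftrightarrow> valring V \<and> D \<subseteq> V"
  unfolding valuation_overring_def valring_def overring_def by auto

lemma prime_one: "prime_ideal R P \<Longrightarrow> 1 \<in> R \<Longrightarrow> 1 \<notin> P"
  unfolding prime_ideal_def by (metis mult.right_neutral subsetI subset_antisym)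

lemma valring_UNIV: "valring UNIV" unfolding valring_def subring_def by auto

lemma mV_UNIV: "mV UNIV = {0}" unfolding mV_def by auto

lemma mV_add:
  assumes V: "valring V" and x: "x \<in> mV V" and y: "y \<in> mV V"
  shows "x + y \<in> mV V"
proof -
  have sub: "subring V" using V valring_def by auto
  have xV: "x \<in> V" and yV: "y \<in> V" using x y mV_def by auto
  have xy: "x + y \<in> V" using subringD(3)[OF sub xV yV] .
  show ?thesis
  proof (cases "x = 0 \<or> y = 0 \<or> x + y = 0")
    case True thus ?thesis using x y xy unfolding mV_def by auto
  next
    case False
    hence nz: "x \<noteq> 0" "y \<noteq> 0" "x + y \<noteq> 0" by auto
    have ix: "inverse x \<notin> V" and iy: "inverse y \<notin> V" using x y nz unfolding mV_def by auto
    show ?thesis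
    proof (rule ccontr)
      assume "x + y \<notin> mV V"
      hence ixy: "inverse (x + y) \<in> V" using xy unfolding mV_def by auto
      have "y / x \<noteq> 0" using nz by auto
      hence "y / x \<in> V \<or> inverse (y / x) \<in> V" using V unfolding valring_def by blast
      thus False
      proof
        assume a: "y / x \<in> V"
        have "inverse x = (1 + y / x) * inverse (x + y)" using nz by (simp add: field_simps)
        moreover have "(1 + y / x) * inverse (x + y) \<in> V" using sub a ixy subringD by metis
        ultimately show False using ix by simp
      next
        assume a: "inverse (y / x) \<in> V"
        have "inverse y = (1 + inverse (y / x)) * inverse (x + y)" using nz by (simp add: field_simps)
        moreover have "(1 + inverse (y/x)) * inverse (x + y) \<in> V" using sub a ixy subringD by metis
        ultimately show False using iy by simp
      qed
    qed
  qed
qed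

lemma mV_mult:
  assumes V: "valring V" and r: "r \<in> V" and x: "x \<in> mV V"
  shows "r * x \<in> mV V"
proof -
  have sub: "subring V" using V valring_def by auto
  have xV: "x \<in> V" using x mV_def by auto
  show ?thesis
  proof (cases "r * x = 0")
    case True thus ?thesis using sub subringD unfolding mV_def by auto
  next
    case False
    hence nz: "r \<noteq> 0" "x \<noteq> 0" by auto
    have "inverse (r * x) \<notin> V"
    proof
      assume "inverse (r * x) \<in> V"
      hence "r * inverse (r * x) \<in> V" using subringD(5)[OF sub r] by blast
      moreover have eq: "r * inverse (r * x) = inverse x" using nz by (simp add: field_simps)
      ultimately have "inverse x \<in> V" by metis
      thus False using x nz unfolding mV_def by auto
    qed
    thus ?thesis using sub r xV subringD unfolding mV_def by auto
  qed
qed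

lemma mV_sub: "mV V \<subseteq> V" unfolding mV_def by auto

lemma mV_one: "valring V \<Longrightarrow> 1 \<notin> mV V" unfolding mV_def by simp

lemma mV_zero: "valring V \<Longrightarrow> 0 \<in> mV V" unfolding mV_def valring_def using subringD by auto

lemma mV_prime: assumes V: "valring V" shows "prime_ideal V (mV V)"
proof -
  have sub: "subring V" using V valring_def by auto
  have "\<forall>a\<in>V. \<forall>b\<in>V. a * b \<in> mV V \<longrightarrow> a \<in> mV V \<or> b \<in> mV V"
  proof (intro ballI impI)
    fix a b assume a: "a \<in> V" and b: "b \<in> V" and ab: "a * b \<in> mV V"
    show "a \<in> mV V \<or> b \<in> mV V"
    proof (rule ccontr)
      assume "\<not> ?thesis"
      hence "a \<noteq> 0" "b \<noteq> 0" "inverse a \<in> V" "inverse b \<in> V" using a b unfolding mV_def by auto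
      hence "a * b \<noteq> 0" "inverse (a * b) \<in> V" using sub subringD
        by (auto simp: inverse_mult_distrib)
      thus False using ab unfolding mV_def by auto
    qed
  qed
  thus ?thesis unfolding prime_ideal_def
    using mV_sub mV_zero[OF V] mV_one[OF V] sub subringD(2) mV_add[OF V] mV_mult[OF V] by blast
qed

lemma mV_anti:
  assumes "valring V" "V \<subseteq> W" shows "mV W \<subseteq> mV V"
proof
  fix x assume x: "x \<in> mV W"
  show "x \<in> mV V"
  proof (cases "x = 0")
    case True thus ?thesis using mV_zero assms by auto
  next
    case False
    hence "inverse x \<notin> W" using x mV_def by auto
    hence "inverse x \<notin> V" using assms by auto
    moreover hence "x \<in> V" using assms False valring_def by auto
    ultimately show ?thesis unfolding mV_def by auto
  qed
qed

lemma prime_sub_mV: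
  assumes "subring W" "prime_ideal W Q" shows "Q \<subseteq> mV W"
proof
  fix q assume q: "q \<in> Q"
  have qW: "q \<in> W" using assms(2) q unfolding prime_ideal_def by blast
  show "q \<in> mV W"
  proof (rule ccontr)
    assume "q \<notin> mV W"
    hence "q \<noteq> 0" "inverse q \<in> W" using qW unfolding mV_def by auto
    hence "inverse q * q = 1" "inverse q * q \<in> Q" using assms(2) q unfolding prime_ideal_def by (simp, blast)
    thus False using prime_one[OF assms(2) subringD(2)[OF assms(1)]] by metis
  qed
qed

lemma prime_down:
  assumes V: "valring V" and W: "valring W" and VW: "V \<subseteq> W" and Q: "prime_ideal W Q"
  shows "prime_ideal V Q"
proof -
  have "Q \<subseteq> mV W" using prime_sub_mV Q W valring_def by auto
  also have "\<dots> \<subseteq> mV V" using mV_anti V VW by auto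
  finally have QV: "Q \<subseteq> V" using mV_sub by auto
  have "1 \<notin> Q" using prime_one Q W valring_def subringD(2) by metis
  hence "Q \<noteq> V" using V valring_def subringD(2) by auto
  thus ?thesis using Q QV VW unfolding prime_ideal_def by blast
qed



definition rmod :: "'a::field set \<Rightarrow> 'a set \<Rightarrow> bool" where
  "rmod R C \<longleftrightarrow> 0 \<in> C \<and> (\<forall>a\<in>C. \<forall>b\<in>C. a + b \<in> C) \<and> (\<forall>r\<in>R. \<forall>a\<in>C. r * a \<in> C)"

definition PolyB :: "'a::field set \<Rightarrow> 'a \<Rightarrow> nat \<Rightarrow> 'a set" where
  "PolyB C x k = {v. \<exists>c. (\<forall>i. c i \<in> C) \<and> v = (\<Sum>i<k. c i * x ^ i)}"

definition Poly :: "'a::field set \<Rightarrow> 'a \<Rightarrow> 'a set" where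
  "Poly C x = (\<Union>k. PolyB C x k)"

lemma PolyBI: "(\<And>i. c i \<in> C) \<Longrightarrow> v = (\<Sum>i<k. c i * x ^ i) \<Longrightarrow> v \<in> PolyB C x k"
  unfolding PolyB_def by blast

lemma PolyBE: assumes "v \<in> PolyB C x k"
  obtains c where "\<forall>i. c i \<in> C" "v = (\<Sum>i<k. c i * x ^ i)"
  using assms unfolding PolyB_def by blast

context fixes R C :: "'a::field set" assumes M: "rmod R C"
begin

lemma pb_zero: "0 \<in> PolyB C x k"
  using M by (intro PolyBI[of "\<lambda>_. 0"]) (auto simp: rmod_def)

lemma pb_add: "p \<in> PolyB C x k \<Longrightarrow> q \<in> PolyB C x k \<Longrightarrow> p + q \<in> PolyB C x k"
  apply (erule PolyBE, erule PolyBE)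
  subgoal for c d
    using M by (intro PolyBI[of "\<lambda>i. c i + d i"]) (auto simp: rmod_def sum.distrib distrib_right)
  done

lemma pb_smul: "r \<in> R \<Longrightarrow> p \<in> PolyB C x k \<Longrightarrow> r * p \<in> PolyB C x k"
  apply (erule PolyBE)
  subgoal for c
    using M by (intro PolyBI[of "\<lambda>i. r * c i"]) (auto simp: rmod_def sum_distrib_left mult.assoc)
  done

lemma pb_mon: "a \<in> C \<Longrightarrow> i < k \<Longrightarrow> a * x ^ i \<in> PolyB C x k"
proof (rule PolyBI[of "\<lambda>j. if j = i then a else 0"])
  show "\<And>j. (if j = i then a else 0) \<in> C" if "a \<in> C" using M that by (auto simp: rmod_def)
  show "a * x ^ i = (\<Sum>j<k. (if j = i then a else 0) * x ^ j)" if "i < k"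
  proof -
    have "(\<Sum>j<k. (if j = i then a else 0) * x ^ j) = (\<Sum>j<k. if i = j then a * x ^ j else 0)"
      by (rule sum.cong) auto
    also have "\<dots> = a * x ^ i" using that by simp
    finally show ?thesis by simp
  qed
qed

lemma pb_mono: assumes "k \<le> k'" shows "PolyB C x k \<subseteq> PolyB C x k'"
proof
  fix p assume "p \<in> PolyB C x k"
  then obtain c where c: "\<forall>i. c i \<in> C" "p = (\<Sum>i<k. c i * x ^ i)" by (rule PolyBE)
  have "(\<Sum>i<k'. (if i < k then c i else 0) * x ^ i) = (\<Sum>i<k. c i * x ^ i)"
  proof -
    have u: "{..<k'} = {..<k} \<union> {k..<k'}" using assms by auto
    have "(\<Sum>i<k'. (if i < k then c i else 0) * x ^ i) =
      (\<Sum>i<k. (if i < k then c i else 0) * x ^ i) + (\<Sum>i\<in>{k..<k'}. (if i < k then c i else 0) * x ^ i)"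
      unfolding u by (rule sum.union_disjoint) auto
    also have "(\<Sum>i\<in>{k..<k'}. (if i < k then c i else 0) * x ^ i) = 0" by (rule sum.neutral) auto
    also have "(\<Sum>i<k. (if i < k then c i else 0) * x ^ i) = (\<Sum>i<k. c i * x ^ i)" by (rule sum.cong) auto
    finally show ?thesis by simp
  qed
  thus "p \<in> PolyB C x k'" using c M
    by (intro PolyBI[of "\<lambda>i. if i < k then c i else 0"]) (auto simp: rmod_def)
qed

lemma pb_shift: "p \<in> PolyB C x k \<Longrightarrow> x * p \<in> PolyB C x (Suc k)"
proof (erule PolyBE)
  fix c assume c: "\<forall>i. c i \<in> C" "p = (\<Sum>i<k. c i * x ^ i)"
  define d where "d i = (case i of 0 \<Rightarrow> 0 | Suc j \<Rightarrow> c j)" for i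
  have "(\<Sum>i<Suc k. d i * x ^ i) = d 0 * x ^ 0 + (\<Sum>i<k. d (Suc i) * x ^ Suc i)"
    by (rule sum.lessThan_Suc_shift)
  also have "\<dots> = x * p" using c by (simp add: d_def sum_distrib_left mult_ac)
  finally show "x * p \<in> PolyB C x (Suc k)"
    using c M by (intro PolyBI[of d]) (auto simp: d_def rmod_def split: nat.splits)
qed

lemma pb_sum: "finite A \<Longrightarrow> (\<And>j. j \<in> A \<Longrightarrow> f j \<in> PolyB C x k) \<Longrightarrow> sum f A \<in> PolyB C x k"
  by (induction A rule: finite_induct) (auto intro: pb_zero pb_add)

lemma poly_zero: "0 \<in> Poly C x" using pb_zero unfolding Poly_def by blast

lemma poly_add: assumes "p \<in> Poly C x" "q \<in> Poly C x" shows "p + q \<in> Poly C x"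
proof -
  obtain k k' where "p \<in> PolyB C x k" "q \<in> PolyB C x k'" using assms unfolding Poly_def by blast
  hence "p \<in> PolyB C x (max k k')" "q \<in> PolyB C x (max k k')"
    using pb_mono[of k "max k k'" x] pb_mono[of k' "max k k'" x] by auto
  thus ?thesis using pb_add unfolding Poly_def by blast
qed

lemma poly_smul: "r \<in> R \<Longrightarrow> p \<in> Poly C x \<Longrightarrow> r * p \<in> Poly C x"
  using pb_smul unfolding Poly_def by blast

lemma poly_shift: "p \<in> Poly C x \<Longrightarrow> x * p \<in> Poly C x"
  using pb_shift unfolding Poly_def by blast

lemma poly_mon: "a \<in> C \<Longrightarrow> a * x ^ i \<in> Poly C x"
  using pb_mon[of a i "Suc i"] unfolding Poly_def by blast

lemma poly_sum: "finite A \<Longrightarrow> (\<And>j. j \<in> A \<Longrightarrow> f j \<in> Poly C x) \<Longrightarrow> sum f A \<in> Poly C x"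
  by (induction A rule: finite_induct) (auto intro: poly_zero poly_add)

lemma poly_powmult: "p \<in> Poly C x \<Longrightarrow> x ^ i * p \<in> Poly C x"
proof (induction i)
  case (Suc i)
  hence "x * (x ^ i * p) \<in> Poly C x" by (intro poly_shift)
  thus ?case by (simp add: mult.assoc)
qed simp

lemma poly_mult_R: assumes "p \<in> Poly C x" "q \<in> Poly R x"
  shows "p * q \<in> Poly C x"
proof -
  obtain k where "q \<in> PolyB R x k" using assms unfolding Poly_def by blast
  then obtain c where c: "\<forall>i. c i \<in> R" "q = (\<Sum>i<k. c i * x ^ i)" by (rule PolyBE)
  have "p * q = (\<Sum>i<k. p * (c i * x ^ i))" using c by (simp add: sum_distrib_left)
  also have "\<dots> = (\<Sum>i<k. c i * (x ^ i * p))" by (rule sum.cong) (simp_all add: mult_ac)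
  also have "\<dots> \<in> Poly C x"
  proof (rule poly_sum)
    fix i assume "i \<in> {..<k}"
    show "c i * (x ^ i * p) \<in> Poly C x" using poly_smul[OF c(1)[rule_format] poly_powmult[OF assms(1)]] .
  qed simp
  finally show ?thesis .
qed

end

lemma rmod_ring: assumes "subring R" shows "rmod R R"
  unfolding rmod_def using subringD[OF assms] by auto

lemma Poly_subring:
  assumes R: "subring R"
  shows "subring (Poly R x)" "R \<subseteq> Poly R x" "x \<in> Poly R x"
proof -
  have M: "rmod R R" using rmod_ring R .
  have sub: "R \<subseteq> Poly R x" using poly_mon[OF M, of _ x 0] by auto
  have neg: "- p \<in> Poly R x" if "p \<in> Poly R x" for p
    using poly_smul[OF M subring_uminus[OF R subringD(2)[OF R]] that] by simp
  show "subring (Poly R x)" unfolding subring_def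
  proof (intro conjI ballI)
    show "0 \<in> Poly R x" "1 \<in> Poly R x" using sub subringD(1,2)[OF R] by auto
    fix a b assume a: "a \<in> Poly R x" and b: "b \<in> Poly R x"
    show "a + b \<in> Poly R x" using poly_add[OF M a b] .
    show "a - b \<in> Poly R x" using poly_add[OF M a neg[OF b]] by simp
    show "a * b \<in> Poly R x" using poly_mult_R[OF M a b] .
  qed
  show "R \<subseteq> Poly R x" by (rule sub)
  show "x \<in> Poly R x" using poly_mon[OF M subringD(2)[OF R], of x 1] by simp
qed

section \<open>The key lemma of Chevalley's extension theorem\<close>

lemma core_step:
  fixes x :: "'a::field"
  assumes R: "subring R" and J: "rmod R J" "J \<subseteq> R" "1 \<notin> J" and x: "x \<noteq> 0"
    and mn: "m \<le> n" and a: "1 \<in> PolyB J x n" and b: "1 \<in> PolyB J (inverse x) m"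
  shows "\<exists>n'. n' < n \<and> 1 \<in> PolyB J x n'"
proof -
  obtain bb where bb: "\<forall>i. bb i \<in> J" "1 = (\<Sum>i<m. bb i * inverse x ^ i)" using b by (rule PolyBE)
  obtain aa where aa: "\<forall>i. aa i \<in> J" "1 = (\<Sum>i<n. aa i * x ^ i)" using a by (rule PolyBE)
  have m0: "m \<noteq> 0"
  proof
    assume "m = 0" thus False using bb(2) by simp
  qed
  have m1: "m \<noteq> 1"
  proof
    assume "m = 1" hence "1 = bb 0" using bb(2) by simp
    thus False using bb(1) J(3) by metis
  qed
  then obtain m' where m': "m = Suc m'" "m' \<noteq> 0" using m0 by (cases m) auto
  obtain n' where n': "n = Suc n'" using mn m0 by (cases n) auto
  have m'n': "m' \<le> n'" using mn m' n' by auto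
  have "1 = bb 0 * inverse x ^ 0 + (\<Sum>i<m'. bb (Suc i) * inverse x ^ Suc i)"
    using bb(2) unfolding m'(1) by (simp only: sum.lessThan_Suc_shift)
  hence e1: "1 - bb 0 = (\<Sum>i<m'. bb (Suc i) * inverse x ^ Suc i)"
    by (metis add_diff_cancel_left' mult_1_right power_0)
  have e2: "(1 - bb 0) * x ^ n' = (\<Sum>i<m'. bb (Suc i) * x ^ (n' - Suc i))"
  proof -
    have "(1 - bb 0) * x ^ n' = (\<Sum>i<m'. bb (Suc i) * (x ^ n' * inverse x ^ Suc i))"
      by (simp add: e1 sum_distrib_left sum_distrib_right mult_ac)
    also have "\<dots> = (\<Sum>i<m'. bb (Suc i) * x ^ (n' - Suc i))"
    proof (rule sum.cong)
      fix i assume "i \<in> {..<m'}"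
      hence "Suc i \<le> n'" using m'n' by auto
      thus "bb (Suc i) * (x ^ n' * inverse x ^ Suc i) = bb (Suc i) * x ^ (n' - Suc i)"
        using x by (simp add: power_diff power_inverse divide_inverse)
    qed simp
    finally show ?thesis .
  qed
  have n'pos: "0 < n'" using m'n' m' by auto
  have P1: "(1 - bb 0) * x ^ n' \<in> PolyB J x n'"
    unfolding e2 using m'n' bb(1) by (intro pb_sum[OF J(1)] pb_mon[OF J(1)]) auto
  have "bb 0 \<in> R" using bb(1) J(2) by blast
  hence b0R: "1 - bb 0 \<in> R" using subringD(4)[OF R subringD(2)[OF R]] by blast
  have A': "(\<Sum>i<n'. aa i * x ^ i) \<in> PolyB J x n'" using aa(1) by (intro PolyBI) auto
  have "1 = (\<Sum>i<n'. aa i * x ^ i) + aa n' * x ^ n'" using aa(2) n' by simp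
  hence "1 - bb 0 = (1 - bb 0) * ((\<Sum>i<n'. aa i * x ^ i) + aa n' * x ^ n')" by simp
  also have "\<dots> = (1 - bb 0) * (\<Sum>i<n'. aa i * x ^ i) + aa n' * ((1 - bb 0) * x ^ n')"
    by (simp add: algebra_simps)
  finally have "1 - bb 0 = (1 - bb 0) * (\<Sum>i<n'. aa i * x ^ i) + aa n' * ((1 - bb 0) * x ^ n')" .
  moreover have "\<dots> \<in> PolyB J x n'"
    using J(2) aa(1) b0R by (intro pb_add[OF J(1)] pb_smul[OF J(1)] A' P1) auto
  ultimately have "1 - bb 0 \<in> PolyB J x n'" by simp
  moreover have "bb 0 \<in> PolyB J x n'" using pb_mon[OF J(1) bb(1)[rule_format, of 0] n'pos, where x=x] by simp
  ultimately have "bb 0 + (1 - bb 0) \<in> PolyB J x n'" using pb_add[OF J(1)] by blast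
  thus ?thesis using n' by auto
qed

lemma core:
  fixes x :: "'a::field"
  assumes R: "subring R" and J: "rmod R J" "J \<subseteq> R" "1 \<notin> J" and x: "x \<noteq> 0"
  shows "\<not> (1 \<in> Poly J x \<and> 1 \<in> Poly J (inverse x))"
proof -
  have main: "\<forall>x n m. n + m \<le> N \<longrightarrow> x \<noteq> 0 \<longrightarrow> 1 \<in> PolyB J x n \<longrightarrow> 1 \<in> PolyB J (inverse x) m \<longrightarrow> False"
    for N
  proof (induction N rule: less_induct)
    case (less N)
    show ?case
    proof (intro allI impI)
      fix x :: 'a and n m assume nm: "n + m \<le> N" and x: "x \<noteq> 0"
        and a: "1 \<in> PolyB J x n" and b: "1 \<in> PolyB J (inverse x) m"
      show False
      proof (cases "m \<le> n")
        case True
        then obtain n' where "n' < n" "1 \<in> PolyB J x n'" using core_step[OF R J x True a b] by blast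
        have "n' + m < N" using \<open>n' < n\<close> nm by simp
        hence H: "\<forall>x n'' m''. n'' + m'' \<le> n' + m \<longrightarrow> x \<noteq> 0 \<longrightarrow> 1 \<in> PolyB J x n'' \<longrightarrow> 1 \<in> PolyB J (inverse x) m'' \<longrightarrow> False"
          by (rule less.IH)
        show False using H \<open>1 \<in> PolyB J x n'\<close> x b by blast
      next
        case False
        have x': "inverse x \<noteq> 0" using x by simp
        have "n \<le> m" using False by simp
        moreover have a2: "1 \<in> PolyB J (inverse (inverse x)) n" using a by simp
        ultimately obtain m' where "m' < m" "1 \<in> PolyB J (inverse x) m'"
          using core_step[OF R J x' _ b a2] by blast
        have "n + m' < N" using \<open>m' < m\<close> nm by simp
        hence H: "\<forall>x n'' m''. n'' + m'' \<le> n + m' \<longrightarrow> x \<noteq> 0 \<longrightarrow> 1 \<in> PolyB J x n'' \<longrightarrow> 1 \<in> PolyB J (inverse x) m'' \<longrightarrow> False"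
          by (rule less.IH)
        have le: "m' + n \<le> n + m'" by simp
        show False by (rule H[rule_format, where x="inverse x" and n''=m' and m''=n, OF le x' \<open>1 \<in> PolyB J (inverse x) m'\<close> a2])
      qed
    qed
  qed
  show ?thesis
  proof
    assume "1 \<in> Poly J x \<and> 1 \<in> Poly J (inverse x)"
    then obtain n m where "1 \<in> PolyB J x n" "1 \<in> PolyB J (inverse x) m" unfolding Poly_def by blast
    thus False using main[of "n + m"] x by blast
  qed
qed



section \<open>Chevalley's extension theorem\<close>

lemma prime_idealD:
  assumes "prime_ideal S Q"
  shows "Q \<subseteq> S" "0 \<in> Q" "x \<in> Q \<Longrightarrow> y \<in> Q \<Longrightarrow> x + y \<in> Q" "r \<in> S \<Longrightarrow> x \<in> Q \<Longrightarrow> r * x \<in> Q"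
    "a \<in> S \<Longrightarrow> b \<in> S \<Longrightarrow> a * b \<in> Q \<Longrightarrow> a \<in> Q \<or> b \<in> Q"
  using assms unfolding prime_ideal_def by blast+

lemma chevalley:
  fixes S Q :: "'a::field set"
  assumes S: "subring S" and Q: "prime_ideal S Q"
  shows "\<exists>V. valring V \<and> S \<subseteq> V \<and> mV V \<inter> S = Q"
proof -
  have QS: "Q \<subseteq> S" and Q0: "0 \<in> Q" using prime_idealD[OF Q] by auto
  have Q1: "1 \<notin> Q" using prime_one[OF Q subringD(2)[OF S]] .
  have nz: "s \<noteq> 0" if "s \<notin> Q" for s using that Q0 by auto
  define L where "L = {a / s | a s. a \<in> S \<and> s \<in> S \<and> s \<notin> Q}"
  define QL where "QL = {a / s | a s. a \<in> Q \<and> s \<in> S \<and> s \<notin> Q}"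
  have sQ: "s * t \<in> S" "s * t \<notin> Q" if "s \<in> S" "s \<notin> Q" "t \<in> S" "t \<notin> Q" for s t
    using that prime_idealD(5)[OF Q] subringD(5)[OF S] by blast+
  have SL: "S \<subseteq> L"
  proof
    fix a assume "a \<in> S" thus "a \<in> L" unfolding L_def using subringD(2)[OF S] Q1
      by (intro CollectI exI[of _ a] exI[of _ 1]) auto
  qed
  have invL: "inverse s \<in> L" if "s \<in> S" "s \<notin> Q" for s
    unfolding L_def using that subringD(2)[OF S]
    by (intro CollectI exI[of _ 1] exI[of _ s]) (auto simp: divide_inverse)
  have Lsub: "subring L"
    unfolding subring_def
  proof (intro conjI ballI)
    show "0 \<in> L" "1 \<in> L" using SL subringD[OF S] by auto
    fix x y assume "x \<in> L" "y \<in> L"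
    then obtain a s b t where x: "x = a / s" "a \<in> S" "s \<in> S" "s \<notin> Q"
      and y: "y = b / t" "b \<in> S" "t \<in> S" "t \<notin> Q" unfolding L_def by blast
    have st: "s * t \<in> S" "s * t \<notin> Q" using sQ x y by auto
    have "x + y = (a * t + b * s) / (s * t)" using x y nz by (simp add: field_simps)
    moreover have "a * t + b * s \<in> S" using x y subringD[OF S] by simp
    ultimately show "x + y \<in> L" unfolding L_def using st by blast
    have "x - y = (a * t - b * s) / (s * t)" using x y nz by (simp add: field_simps)
    moreover have "a * t - b * s \<in> S" using x y subringD[OF S] by simp
    ultimately show "x - y \<in> L" unfolding L_def using st by blast
    have "x * y = (a * b) / (s * t)" using x y by simp
    moreover have "a * b \<in> S" using x y subringD[OF S] by simp
    ultimately show "x * y \<in> L" unfolding L_def using st by blast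
  qed
  have gQL: "genset Q L \<subseteq> QL"
  proof (rule genset_least)
    show "0 \<in> QL" unfolding QL_def using Q0 Q1 subringD(2)[OF S]
      by (intro CollectI exI[of _ 0] exI[of _ 1]) auto
    fix x y assume "x \<in> QL" "y \<in> QL"
    then obtain a s b t where x: "x = a / s" "a \<in> Q" "s \<in> S" "s \<notin> Q"
      and y: "y = b / t" "b \<in> Q" "t \<in> S" "t \<notin> Q" unfolding QL_def by blast
    have st: "s * t \<in> S" "s * t \<notin> Q" using sQ x y by auto
    have "x + y = (a * t + b * s) / (s * t)" using x y nz by (simp add: field_simps)
    moreover have "a * t + b * s \<in> Q" using x y prime_idealD[OF Q] by (metis mult.commute)
    ultimately show "x + y \<in> QL" unfolding QL_def using st by blast
  next
    fix e t assume e: "e \<in> Q" and "t \<in> L"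
    then obtain a s where t: "t = a / s" "a \<in> S" "s \<in> S" "s \<notin> Q" unfolding L_def by blast
    have "e * t = (a * e) / s" using t by simp
    moreover have "a * e \<in> Q" using prime_idealD(4)[OF Q t(2) e] .
    ultimately show "e * t \<in> QL" unfolding QL_def using t by blast
  qed
  have oneQL: "1 \<notin> QL"
  proof
    assume "1 \<in> QL"
    then obtain a s where "1 = a / s" "a \<in> Q" "s \<notin> Q" unfolding QL_def by blast
    thus False using nz by (metis divide_self_if mult_1 nonzero_eq_divide_eq)
  qed
  define \<Sigma> where "\<Sigma> = {R. subring R \<and> L \<subseteq> R \<and> 1 \<notin> genset Q R}"
  have "\<exists>M\<in>\<Sigma>. \<forall>X\<in>\<Sigma>. M \<subseteq> X \<longrightarrow> X = M"
  proof (rule subset_Zorn_nonempty)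
    show "\<Sigma> \<noteq> {}" using Lsub gQL oneQL unfolding \<Sigma>_def by blast
    fix C assume C: "C \<noteq> {}" "subset.chain \<Sigma> C"
    have CS: "C \<subseteq> \<Sigma>" and ch: "\<And>X Y. X \<in> C \<Longrightarrow> Y \<in> C \<Longrightarrow> X \<subseteq> Y \<or> Y \<subseteq> X"
      using C(2) unfolding subset_chain_def by auto
    have sub: "subring (\<Union>C)" unfolding subring_def
    proof (intro conjI ballI)
      obtain R0 where "R0 \<in> C" using C by blast
      thus "0 \<in> \<Union>C" "1 \<in> \<Union>C" using CS subringD unfolding \<Sigma>_def by blast+
      fix x y assume "x \<in> \<Union>C" "y \<in> \<Union>C"
      then obtain X Y where XY: "X \<in> C" "Y \<in> C" "x \<in> X" "y \<in> Y" by blast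
      obtain Z where Z: "Z \<in> C" "x \<in> Z" "y \<in> Z" using ch[OF XY(1,2)] XY by blast
      have "subring Z" using Z CS unfolding \<Sigma>_def by blast
      thus "x + y \<in> \<Union>C" "x - y \<in> \<Union>C" "x * y \<in> \<Union>C" using Z subringD[OF \<open>subring Z\<close>] by blast+
    qed
    have "L \<subseteq> \<Union>C" using C CS unfolding \<Sigma>_def by blast
    moreover have "1 \<notin> genset Q (\<Union>C)"
    proof
      assume "1 \<in> genset Q (\<Union>C)"
      then obtain R where "R \<in> C" "1 \<in> genset Q R" using genset_Union_chain[OF C(1) ch] by blast
      thus False using CS unfolding \<Sigma>_def by blast
    qed
    ultimately show "\<Union>C \<in> \<Sigma>" using sub unfolding \<Sigma>_def by blast
  qed
  then obtain R where R\<Sigma>: "R \<in> \<Sigma>" and Rmax: "\<And>X. X \<in> \<Sigma> \<Longrightarrow> R \<subseteq> X \<Longrightarrow> X = R" by blast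
  have Rsub: "subring R" and LR: "L \<subseteq> R" and R1: "1 \<notin> genset Q R" using R\<Sigma> unfolding \<Sigma>_def by auto
  define J where "J = genset Q R"
  have Jmod: "rmod R J" unfolding rmod_def J_def
    using genset_zero genset_add genset_mult_left[OF _ Rsub] by blast
  have JR: "J \<subseteq> R" unfolding J_def using QS SL LR by (intro genset_sub_ring[OF Rsub]) auto
  have J1: "1 \<notin> J" using R1 J_def by simp
  have ext: "1 \<in> Poly J y" if y: "y \<notin> R" for y
  proof -
    have P: "subring (Poly R y)" "R \<subseteq> Poly R y" "y \<in> Poly R y" using Poly_subring[OF Rsub] by auto
    have "Poly R y \<notin> \<Sigma>"
    proof
      assume "Poly R y \<in> \<Sigma>"
      hence "Poly R y = R" using Rmax P(2) by blast
      thus False using P(3) y by simp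
    qed
    hence "1 \<in> genset Q (Poly R y)" using P LR unfolding \<Sigma>_def by auto
    moreover have "genset Q (Poly R y) \<subseteq> Poly J y"
    proof (rule genset_least)
      show "0 \<in> Poly J y" by (rule poly_zero[OF Jmod])
      show "a + b \<in> Poly J y" if "a \<in> Poly J y" "b \<in> Poly J y" for a b
        using poly_add[OF Jmod that] .
      fix e p assume e: "e \<in> Q" and "p \<in> Poly R y"
      then obtain k where "p \<in> PolyB R y k" unfolding Poly_def by blast
      then obtain c where c: "\<forall>i. c i \<in> R" "p = (\<Sum>i<k. c i * y ^ i)" by (rule PolyBE)
      have "e * p = (\<Sum>i<k. (e * c i) * y ^ i)" using c by (simp add: sum_distrib_left mult.assoc)
      moreover have "\<forall>i. e * c i \<in> J" unfolding J_def using c e genset_single by blast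
      ultimately have "e * p \<in> PolyB J y k" by (intro PolyBI[of "\<lambda>i. e * c i"]) auto
      thus "e * p \<in> Poly J y" unfolding Poly_def by blast
    qed
    ultimately show ?thesis by blast
  qed
  have val: "valring R" unfolding valring_def
  proof (intro conjI allI impI Rsub)
    fix x :: 'a assume x: "x \<noteq> 0"
    show "x \<in> R \<or> inverse x \<in> R"
    proof (rule ccontr)
      assume "\<not> ?thesis"
      hence "1 \<in> Poly J x" "1 \<in> Poly J (inverse x)" using ext by auto
      thus False using core[OF Rsub Jmod JR J1 x] by blast
    qed
  qed
  have "mV R \<inter> S = Q"
  proof
    show "mV R \<inter> S \<subseteq> Q"
    proof
      fix s assume s: "s \<in> mV R \<inter> S"
      show "s \<in> Q"
      proof (rule ccontr)
        assume "s \<notin> Q"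
        hence "inverse s \<in> R" "s \<noteq> 0" using invL s LR nz by auto
        thus False using s unfolding mV_def by auto
      qed
    qed
    show "Q \<subseteq> mV R \<inter> S"
    proof
      fix q assume q: "q \<in> Q"
      have qR: "q \<in> R" using q QS SL LR by auto
      have "inverse q \<notin> R" if "q \<noteq> 0"
      proof
        assume "inverse q \<in> R"
        hence "q * inverse q \<in> genset Q R" using genset_single q by blast
        thus False using that R1 by simp
      qed
      thus "q \<in> mV R \<inter> S" using qR q QS unfolding mV_def by auto
    qed
  qed
  thus ?thesis using val SL LR by blast
qed



lemma mV_neg: "valring V \<Longrightarrow> m \<in> mV V \<Longrightarrow> - m \<in> mV V"
  using mV_mult[of V "-1" m] subring_uminus[of V 1] subringD(2)[of V] unfolding valring_def by auto

lemma mV_diff: "valring V \<Longrightarrow> m \<in> mV V \<Longrightarrow> m' \<in> mV V \<Longrightarrow> m - m' \<in> mV V"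
  using mV_add[of V m "- m'"] mV_neg[of V m'] by simp

lemma mV_comb:
  assumes W: "valring W" and t: "t \<in> W" "t' \<in> W" and m: "m \<in> mV W" "m' \<in> mV W"
  shows "t * m' + t' * m + m * m' \<in> mV W"
proof -
  have a: "t * m' \<in> mV W" by (rule mV_mult[OF W t(1) m(2)])
  have b: "t' * m \<in> mV W" by (rule mV_mult[OF W t(2) m(1)])
  have "m \<in> W" using m(1) mV_sub by blast
  hence c: "m * m' \<in> mV W" by (rule mV_mult[OF W _ m(2)])
  show ?thesis by (rule mV_add[OF W mV_add[OF W a b] c])
qed

lemma val_step:
  fixes T W P :: "'a::field set"
  assumes W: "valring W" and T: "subring T" and TW: "T \<subseteq> W" and P: "prime_ideal T P"
    and cont: "mV W \<inter> T \<subseteq> P"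
  shows "\<exists>V. valring V \<and> T \<subseteq> V \<and> V \<subseteq> W \<and> mV V \<inter> T = P"
proof -
  have Wsub: "subring W" using W valring_def by auto
  note PD = prime_idealD[OF P]
  have mW: "mV W \<subseteq> W" by (rule mV_sub)
  have m0: "0 \<in> mV W" using mV_zero[OF W] .
  define S where "S = {t + m | t m. t \<in> T \<and> m \<in> mV W}"
  define Q where "Q = {p + m | p m. p \<in> P \<and> m \<in> mV W}"
  have TS: "T \<subseteq> S" unfolding S_def using m0 by force
  have mQ: "mV W \<subseteq> Q" unfolding Q_def using PD(2) by force
  have QT: "Q \<inter> T = P"
  proof
    show "P \<subseteq> Q \<inter> T" unfolding Q_def using m0 PD(1) by force
    show "Q \<inter> T \<subseteq> P"
    proof
      fix x assume "x \<in> Q \<inter> T"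
      then obtain p m where x: "x = p + m" "p \<in> P" "m \<in> mV W" "x \<in> T" unfolding Q_def by blast
      have "m = x - p" using x by simp
      moreover have "x - p \<in> T" using x PD(1) subringD(4)[OF T] by blast
      ultimately have "m \<in> P" using cont x by auto
      thus "x \<in> P" using x PD(3) by simp
    qed
  qed
  have Ssub: "subring S" unfolding subring_def
  proof (intro conjI ballI)
    show "0 \<in> S" "1 \<in> S" using TS subringD(1,2)[OF T] by auto
    fix x y assume "x \<in> S" "y \<in> S"
    then obtain t m t' m' where x: "x = t + m" "t \<in> T" "m \<in> mV W"
      and y: "y = t' + m'" "t' \<in> T" "m' \<in> mV W" unfolding S_def by blast
    have tW: "t \<in> W" "t' \<in> W" using x y TW by auto
    have "x + y = (t + t') + (m + m')" using x y by simp
    moreover have "t + t' \<in> T" "m + m' \<in> mV W" using x y subringD(3)[OF T] mV_add[OF W] by auto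
    ultimately show "x + y \<in> S" unfolding S_def by blast
    have "x - y = (t - t') + (m - m')" using x y by simp
    moreover have "t - t' \<in> T" "m - m' \<in> mV W" using x y subringD(4)[OF T] mV_diff[OF W] by auto
    ultimately show "x - y \<in> S" unfolding S_def by blast
    have "x * y = t * t' + (t * m' + t' * m + m * m')" using x y by (simp add: algebra_simps)
    moreover have "t * t' \<in> T" using x y subringD(5)[OF T] by auto
    moreover have "t * m' + t' * m + m * m' \<in> mV W"
      using mV_comb[OF W tW x(3) y(3)] .
    ultimately show "x * y \<in> S" unfolding S_def by blast
  qed
  have Qprime: "prime_ideal S Q" unfolding prime_ideal_def
  proof (intro conjI ballI impI)
    show "Q \<subseteq> S" unfolding Q_def S_def using PD(1) by blast
    show "0 \<in> Q" using mQ m0 by auto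
    have "1 \<notin> Q" using QT prime_one[OF P subringD(2)[OF T]] subringD(2)[OF T] by blast
    thus "Q \<noteq> S" using TS subringD(2)[OF T] by blast
    fix x y assume "x \<in> Q" "y \<in> Q"
    then obtain p m p' m' where x: "x = p + m" "p \<in> P" "m \<in> mV W"
      and y: "y = p' + m'" "p' \<in> P" "m' \<in> mV W" unfolding Q_def by blast
    have "x + y = (p + p') + (m + m')" using x y by simp
    thus "x + y \<in> Q" unfolding Q_def using x y PD(3) mV_add[OF W] by blast
  next
    fix r x assume "r \<in> S" "x \<in> Q"
    then obtain t m p m' where r: "r = t + m" "t \<in> T" "m \<in> mV W"
      and x: "x = p + m'" "p \<in> P" "m' \<in> mV W" unfolding Q_def S_def by blast
    have pW: "p \<in> W" "t \<in> W" using x r PD(1) TW by auto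
    have "r * x = t * p + (t * m' + p * m + m * m')" using x r by (simp add: algebra_simps)
    moreover have "t * p \<in> P" using PD(4) r x by blast
    moreover have "t * m' + p * m + m * m' \<in> mV W"
      using mV_comb[OF W pW(2) pW(1) r(3) x(3)] .
    ultimately show "r * x \<in> Q" unfolding Q_def by blast
  next
    fix a b assume "a \<in> S" "b \<in> S" "a * b \<in> Q"
    then obtain t m t' m' p m'' where a: "a = t + m" "t \<in> T" "m \<in> mV W"
      and b: "b = t' + m'" "t' \<in> T" "m' \<in> mV W" and ab: "a * b = p + m''" "p \<in> P" "m'' \<in> mV W"
      unfolding Q_def S_def by blast
    have tW: "t \<in> W" "t' \<in> W" using a b TW by auto
    define n where "n = t * m' + t' * m + m * m'"
    have n: "n \<in> mV W" unfolding n_def using mV_comb[OF W tW a(3) b(3)] .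
    have "t * t' = p + (m'' - n)" using a b ab unfolding n_def by (simp add: algebra_simps)
    moreover have "p + (m'' - n) \<in> Q" unfolding Q_def using ab n mV_diff[OF W] by blast
    moreover have "t * t' \<in> T" using a b subringD(5)[OF T] by auto
    ultimately have "t * t' \<in> P" using QT by auto
    hence "t \<in> P \<or> t' \<in> P" using PD(5) a b by blast
    thus "a \<in> Q \<or> b \<in> Q" unfolding Q_def using a b by blast
  qed
  obtain V where V: "valring V" "S \<subseteq> V" "mV V \<inter> S = Q" using chevalley[OF Ssub Qprime] by blast
  have VW: "V \<subseteq> W"
  proof
    fix y assume y: "y \<in> V"
    show "y \<in> W"
    proof (rule ccontr)
      assume yW: "y \<notin> W"
      hence y0: "y \<noteq> 0" using subringD(1)[OF Wsub] by auto
      hence iW: "inverse y \<in> W" using W yW valring_def by auto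
      have "inverse y \<in> mV W" using iW yW y0 unfolding mV_def by auto
      hence "inverse y \<in> Q" using mQ by auto
      hence "inverse y \<in> mV V" using V by auto
      thus False using y y0 unfolding mV_def by auto
    qed
  qed
  have "mV V \<inter> T = P" using V(3) TS QT by blast
  thus ?thesis using V VW TS by blast
qed

lemma val_chain_aux:
  fixes T :: "'a::field set" and P :: "nat \<Rightarrow> 'a set"
  assumes T: "subring T" and P: "\<forall>i\<le>n. prime_ideal T (P i)" and mono: "\<forall>i<n. P i \<subseteq> P (Suc i)"
  shows "k \<le> n \<Longrightarrow> \<exists>V Q. valring V \<and> T \<subseteq> V \<and> (\<forall>i\<le>k. prime_ideal V (Q i) \<and> Q i \<inter> T = P i)
     \<and> (\<forall>i<k. Q i \<subseteq> Q (Suc i)) \<and> Q k = mV V"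
proof (induction k)
  case 0
  have P0: "prime_ideal T (P 0)" using P by simp
  have "0 \<in> P 0" using prime_idealD(2)[OF P0] .
  have c0: "mV UNIV \<inter> T \<subseteq> P 0"
  proof
    fix x assume "x \<in> mV UNIV \<inter> T"
    hence "x \<in> mV UNIV" by blast
    hence "x = 0" unfolding mV_UNIV by simp
    thus "x \<in> P 0" using \<open>0 \<in> P 0\<close> by simp
  qed
  obtain V where V: "valring V" "T \<subseteq> V" "mV V \<inter> T = P 0"
    using val_step[OF valring_UNIV T subset_UNIV P0 c0] by blast
  have "\<forall>i\<le>0. prime_ideal V ((\<lambda>_. mV V) i) \<and> (\<lambda>_. mV V) i \<inter> T = P i"
    using V(3) mV_prime[OF V(1)] by simp
  moreover have "\<forall>i<0. (\<lambda>_. mV V) i \<subseteq> (\<lambda>_. mV V) (Suc i)" by simp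
  ultimately show ?case using V(1,2) by (intro exI[of _ V] exI[of _ "\<lambda>_. mV V"]) simp
next
  case (Suc k)
  hence "k \<le> n" by simp
  then obtain V Q where V: "valring V" "T \<subseteq> V" "\<forall>i\<le>k. prime_ideal V (Q i) \<and> Q i \<inter> T = P i"
    "\<forall>i<k. Q i \<subseteq> Q (Suc i)" "Q k = mV V" using Suc.IH by blast
  have Qk: "Q k \<inter> T = P k" using V(3) by simp
  have "P k \<subseteq> P (Suc k)" using mono Suc.prems by simp
  hence cont: "mV V \<inter> T \<subseteq> P (Suc k)" using Qk V(5) by simp
  have PS: "prime_ideal T (P (Suc k))" using P Suc.prems by simp
  obtain V' where V': "valring V'" "T \<subseteq> V'" "V' \<subseteq> V" "mV V' \<inter> T = P (Suc k)"
    using val_step[OF V(1) T V(2) PS cont] by blast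
  define Q' where "Q' = Q(Suc k := mV V')"
  have "\<forall>i\<le>Suc k. prime_ideal V' (Q' i) \<and> Q' i \<inter> T = P i"
  proof (intro allI impI)
    fix i assume i: "i \<le> Suc k"
    show "prime_ideal V' (Q' i) \<and> Q' i \<inter> T = P i"
    proof (cases "i = Suc k")
      case True thus ?thesis using V'(4) mV_prime[OF V'(1)] by (simp add: Q'_def)
    next
      case False
      hence ik: "i \<le> k" "Q' i = Q i" using i by (auto simp: Q'_def)
      have "prime_ideal V (Q i)" "Q i \<inter> T = P i" using V(3) ik(1) by auto
      thus ?thesis using prime_down[OF V'(1) V(1) V'(3)] ik(2) by simp
    qed
  qed
  moreover have "\<forall>i<Suc k. Q' i \<subseteq> Q' (Suc i)"
  proof (intro allI impI)
    fix i assume i: "i < Suc k"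
    show "Q' i \<subseteq> Q' (Suc i)"
    proof (cases "i = k")
      case True thus ?thesis using V(5) mV_anti[OF V'(1) V'(3)] by (simp add: Q'_def)
    next
      case False
      hence "i < k" using i by simp
      thus ?thesis using V(4) by (simp add: Q'_def)
    qed
  qed
  moreover have "Q' (Suc k) = mV V'" by (simp add: Q'_def)
  ultimately show ?case using V'(1,2) by (intro exI[of _ V'] exI[of _ Q']) simp
qed

lemma val_chain:
  fixes T :: "'a::field set" and P :: "nat \<Rightarrow> 'a set"
  assumes T: "subring T" and P: "\<forall>i\<le>n. prime_ideal T (P i)" and mono: "\<forall>i<n. P i \<subset> P (Suc i)"
  shows "\<exists>V. valring V \<and> T \<subseteq> V \<and> enat n \<le> krull_dim V"
proof -
  obtain V Q where V: "valring V" "T \<subseteq> V" "\<forall>i\<le>n. prime_ideal V (Q i) \<and> Q i \<inter> T = P i"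
    "\<forall>i<n. Q i \<subseteq> Q (Suc i)"
  proof -
    have "\<forall>i<n. P i \<subseteq> P (Suc i)" using mono by blast
    from val_chain_aux[OF T P this order_refl] show ?thesis using that by blast
  qed
  have "\<forall>i<n. Q i \<subset> Q (Suc i)"
  proof (intro allI impI)
    fix i assume i: "i < n"
    have "Q i \<inter> T = P i" "Q (Suc i) \<inter> T = P (Suc i)" using V(3) i by auto
    hence "Q i \<noteq> Q (Suc i)" using mono i by auto
    thus "Q i \<subset> Q (Suc i)" using V(4) i by auto
  qed
  hence "enat n \<in> {enat n | n. \<exists>P. (\<forall>i\<le>n. prime_ideal V (P i)) \<and> (\<forall>i<n. P i \<subset> P (Suc i))}"
    using V(3) by blast
  hence "enat n \<le> krull_dim V" unfolding krull_dim_def by (rule Sup_upper)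
  thus ?thesis using V by blast
qed



lemma Fbar_iff: "E \<in> Fbar D \<longleftrightarrow> 0 \<in> E \<and> E \<noteq> {0} \<and> (\<forall>x\<in>E. \<forall>y\<in>E. x + y \<in> E) \<and> (\<forall>d\<in>D. \<forall>x\<in>E. d * x \<in> E)"
  unfolding Fbar_def by simp

lemma FbarD:
  assumes "E \<in> Fbar D"
  shows "0 \<in> E" "E \<noteq> {0}" "x \<in> E \<Longrightarrow> y \<in> E \<Longrightarrow> x + y \<in> E" "d \<in> D \<Longrightarrow> x \<in> E \<Longrightarrow> d * x \<in> E"
  using assms unfolding Fbar_iff by blast+

lemma D_Fbar: assumes D: "subring D" shows "D \<in> Fbar D"
proof -
  have "(1::'a) \<noteq> 0" by simp
  hence "D \<noteq> {0}" using subringD(2)[OF D] by blast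
  thus ?thesis unfolding Fbar_iff using subringD(1)[OF D] subringD(3)[OF D] subringD(5)[OF D] by simp
qed

lemma genset_Fbar:
  assumes D: "subring D" and "genset G D \<noteq> {0}"
  shows "genset G D \<in> Fbar D"
  unfolding Fbar_iff
proof (intro conjI ballI)
  show "0 \<in> genset G D" by (rule genset_zero)
  show "genset G D \<noteq> {0}" by (rule assms(2))
  fix x y assume "x \<in> genset G D" "y \<in> genset G D"
  thus "x + y \<in> genset G D" by (rule genset_add)
next
  fix d x assume "d \<in> D" "x \<in> genset G D"
  thus "d * x \<in> genset G D" using genset_mult_left[OF _ D] by blast
qed

lemma fD_Fbar: "subring D \<Longrightarrow> F \<in> fD D \<Longrightarrow> F \<in> Fbar D"
  unfolding fD_def using genset_Fbar[of D] by auto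

lemma fD_E:
  assumes "F \<in> fD D"
  obtains G where "finite G" "F = genset G D" "F \<noteq> {0}"
  using assms unfolding fD_def by blast

lemma semistarD:
  assumes "semistar D st"
  shows "E \<in> Fbar D \<Longrightarrow> st E \<in> Fbar D"
    "E \<in> Fbar D \<Longrightarrow> F \<in> Fbar D \<Longrightarrow> E \<subseteq> F \<Longrightarrow> st E \<subseteq> st F"
    "E \<in> Fbar D \<Longrightarrow> E \<subseteq> st E" "E \<in> Fbar D \<Longrightarrow> st (st E) = st E"
  using assms unfolding semistar_def by simp_all

lemma Fbar_module_sub:
  assumes "J \<in> Fbar D" "G \<subseteq> J" shows "genset G D \<subseteq> J"
  using FbarD[OF assms(1)] assms(2) by (intro genset_sub_module) auto

lemma star_f_I: "F \<in> fD D \<Longrightarrow> F \<subseteq> E \<Longrightarrow> x \<in> st F \<Longrightarrow> x \<in> star_f D st E"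
  unfolding star_f_def by blast

lemma star_f_E: assumes "x \<in> star_f D st E"
  obtains F where "F \<in> fD D" "F \<subseteq> E" "x \<in> st F"
  using assms unfolding star_f_def by blast

lemma one_in_st_eq:
  assumes D: "subring D" and st: "semistar D st" and F: "F \<in> Fbar D" "F \<subseteq> D" and one: "1 \<in> st F"
  shows "st F = st D"
proof
  have DF: "D \<in> Fbar D" using D_Fbar[OF D] .
  show "st F \<subseteq> st D" using semistarD(2)[OF st F(1) DF F(2)] .
  have sF: "st F \<in> Fbar D" using semistarD(1)[OF st F(1)] .
  have "D \<subseteq> st F" using FbarD(4)[OF sF _ one] by auto
  hence "st D \<subseteq> st (st F)" using semistarD(2)[OF st DF sF] by blast
  thus "st D \<subseteq> st F" using semistarD(4)[OF st F(1)] by simp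
qed

lemma quasi_not_one:
  assumes "quasi_star_f_ideal D st M" "M \<noteq> D" shows "1 \<notin> M"
proof
  assume "1 \<in> M"
  have "M \<in> Fbar D" "M \<subseteq> D" using assms unfolding quasi_star_f_ideal_def by auto
  hence "D \<subseteq> M" using FbarD(4)[OF \<open>M \<in> Fbar D\<close> _ \<open>1 \<in> M\<close>] by auto
  thus False using assms \<open>M \<subseteq> D\<close> by auto
qed

lemma tilde_val_linked:
  assumes D: "subring D" and st: "semistar D st" and V: "star_tilde_valuation_overring D st V"
  shows "star_linked D st V"
proof -
  have Vo: "valuation_overring D V" and Vt: "\<And>F. F \<in> fD D \<Longrightarrow> star_tilde D st F \<subseteq> genset F V"
    using V unfolding star_tilde_valuation_overring_def by auto
  have val: "valring V" "D \<subseteq> V" using Vo valuation_overring_iff by auto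
  have "genset F V = V" if F: "F \<in> fD D" "F \<subseteq> D" "st F = st D" for F
  proof -
    have FF: "F \<in> Fbar D" using fD_Fbar[OF D F(1)] .
    have "1 \<in> star_tilde D st F" unfolding star_tilde_def
    proof
      fix M assume M: "M \<in> QMax D st"
      hence Mq: "quasi_star_f_ideal D st M" "M \<noteq> D" unfolding QMax_def by auto
      have MF: "M \<in> Fbar D" "M \<subseteq> D" "star_f D st M \<inter> D = M"
        using Mq unfolding quasi_star_f_ideal_def by auto
      have "\<not> F \<subseteq> M"
      proof
        assume "F \<subseteq> M"
        have "1 \<in> st D" using semistarD(3)[OF st D_Fbar[OF D]] subringD(2)[OF D] by auto
        hence "1 \<in> st F" using F by simp
        hence "1 \<in> star_f D st M" using star_f_I[OF F(1) \<open>F \<subseteq> M\<close>] by blast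
        hence "1 \<in> M" using MF subringD(2)[OF D] by blast
        thus False using quasi_not_one[OF Mq] by blast
      qed
      then obtain f where f: "f \<in> F" "f \<notin> M" by blast
      have fD: "f \<in> D" using f F by auto
      have f0: "f \<noteq> 0" using f FbarD(1)[OF MF(1)] by auto
      have "1 / f \<in> localization D M" unfolding localization_def
        using fD f subringD(2)[OF D] by blast
      hence "f * (1 / f) \<in> genset F (localization D M)" using genset_single f by blast
      thus "1 \<in> genset F (localization D M)" using f0 by simp
    qed
    hence "1 \<in> genset F V" using Vt[OF F(1)] by blast
    thus ?thesis using genset_one_ring[of F V] val F(2) unfolding valring_def by blast
  qed
  moreover have "overring D V" using Vo unfolding valuation_overring_def by auto
  ultimately show ?thesis unfolding star_linked_def by blast
qed



lemma finite_chain_bound: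
  assumes "finite G" "C \<noteq> {}" "\<And>X Y. X \<in> C \<Longrightarrow> Y \<in> C \<Longrightarrow> X \<subseteq> Y \<or> Y \<subseteq> X" "G \<subseteq> \<Union>C"
  shows "\<exists>J\<in>C. G \<subseteq> J"
  using assms(1,4)
proof (induction G rule: finite_induct)
  case empty thus ?case using assms(2) by blast
next
  case (insert g G)
  then obtain J where J: "J \<in> C" "G \<subseteq> J" by blast
  obtain J' where J': "J' \<in> C" "g \<in> J'" using insert.prems by blast
  show ?case
  proof (cases "J \<subseteq> J'")
    case True thus ?thesis using J J' by blast
  next
    case False hence "J' \<subseteq> J" using assms(3)[OF J(1) J'(1)] by blast
    thus ?thesis using J J' by blast
  qed
qed

lemma genset_supset: assumes "subring T" shows "E \<subseteq> genset E T"
proof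
  fix e assume "e \<in> E" thus "e \<in> genset E T" by (rule genset_gen[OF assms])
qed

lemma fD_I: "finite G \<Longrightarrow> genset G D \<noteq> {0} \<Longrightarrow> genset G D \<in> fD D"
  unfolding fD_def by blast

lemma Fbar_sub_star_f:
  assumes D: "subring D" and st: "semistar D st" and J: "J \<in> Fbar D"
  shows "J \<subseteq> star_f D st J"
proof
  fix x assume x: "x \<in> J"
  obtain y where y: "y \<in> J" "y \<noteq> 0" using FbarD(1,2)[OF J] by blast
  define F where "F = genset {x, y} D"
  have "y \<in> F" unfolding F_def by (rule genset_gen[OF D]) simp
  hence "F \<noteq> {0}" using y by blast
  hence "F \<in> fD D" unfolding F_def by (intro fD_I) auto
  moreover have "F \<subseteq> J" unfolding F_def using x y by (intro Fbar_module_sub[OF J]) auto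
  moreover have "x \<in> st F"
  proof -
    have "x \<in> F" unfolding F_def by (rule genset_gen[OF D]) simp
    thus ?thesis using semistarD(3)[OF st fD_Fbar[OF D \<open>F \<in> fD D\<close>]] by blast
  qed
  ultimately show "x \<in> star_f D st J" by (rule star_f_I)
qed

lemma exists_QMax:
  assumes D: "subring D" and st: "semistar D st" and P: "P \<in> Fbar D" "P \<subseteq> D"
    and P1: "1 \<notin> star_f D st P"
  shows "\<exists>M\<in>QMax D st. P \<subseteq> M"
proof -
  define Z where "Z = {J. J \<in> Fbar D \<and> J \<subseteq> D \<and> P \<subseteq> J \<and> 1 \<notin> star_f D st J}"
  have "\<exists>M\<in>Z. \<forall>X\<in>Z. M \<subseteq> X \<longrightarrow> X = M"
  proof (rule subset_Zorn_nonempty)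
    show "Z \<noteq> {}" using P P1 unfolding Z_def by blast
    fix C assume C: "C \<noteq> {}" "subset.chain Z C"
    have CZ: "C \<subseteq> Z" and ch: "\<And>X Y. X \<in> C \<Longrightarrow> Y \<in> C \<Longrightarrow> X \<subseteq> Y \<or> Y \<subseteq> X"
      using C(2) unfolding subset_chain_def by auto
    have mem: "J \<in> Fbar D" "J \<subseteq> D" "P \<subseteq> J" "1 \<notin> star_f D st J" if "J \<in> C" for J
      using that CZ unfolding Z_def by auto
    obtain J0 where J0: "J0 \<in> C" using C(1) by blast
    have U: "\<Union>C \<in> Fbar D" unfolding Fbar_iff
    proof (intro conjI ballI)
      show "0 \<in> \<Union>C" using FbarD(1)[OF mem(1)[OF J0]] J0 by blast
      show "\<Union>C \<noteq> {0}"
      proof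
        assume "\<Union>C = {0}"
        hence "J0 \<subseteq> {0}" using J0 by blast
        thus False using FbarD(1,2)[OF mem(1)[OF J0]] by blast
      qed
      fix x y assume "x \<in> \<Union>C" "y \<in> \<Union>C"
      then obtain X Y where XY: "X \<in> C" "Y \<in> C" "x \<in> X" "y \<in> Y" by blast
      obtain W where W: "W \<in> C" "x \<in> W" "y \<in> W" using ch[OF XY(1,2)] XY by blast
      show "x + y \<in> \<Union>C" using FbarD(3)[OF mem(1)[OF W(1)] W(2,3)] W(1) by blast
    next
      fix d x assume d: "d \<in> D" and "x \<in> \<Union>C"
      then obtain X where X: "X \<in> C" "x \<in> X" by blast
      show "d * x \<in> \<Union>C" using FbarD(4)[OF mem(1)[OF X(1)] d X(2)] X(1) by blast
    qed
    have "\<Union>C \<subseteq> D" using mem(2) by blast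
    moreover have "P \<subseteq> \<Union>C" using mem(3)[OF J0] J0 by blast
    moreover have "1 \<notin> star_f D st (\<Union>C)"
    proof
      assume "1 \<in> star_f D st (\<Union>C)"
      then obtain F where F: "F \<in> fD D" "F \<subseteq> \<Union>C" "1 \<in> st F" unfolding star_f_def by blast
      obtain G where G: "finite G" "F = genset G D" using fD_E[OF F(1)] by blast
      have "G \<subseteq> F" using genset_supset[OF D, of G] G(2) by simp
      then obtain J where J: "J \<in> C" "G \<subseteq> J" using finite_chain_bound[OF G(1) C(1) ch] F(2) by blast
      have "F \<subseteq> J" using G(2) Fbar_module_sub[OF mem(1)[OF J(1)] J(2)] by simp
      have "1 \<in> star_f D st J" unfolding star_f_def using F(1) \<open>F \<subseteq> J\<close> F(3) by blast
      thus False using mem(4)[OF J(1)] by blast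
    qed
    ultimately show "\<Union>C \<in> Z" using U unfolding Z_def by blast
  qed
  then obtain M where MZ: "M \<in> Z" and Mmax: "\<And>X. X \<in> Z \<Longrightarrow> M \<subseteq> X \<Longrightarrow> X = M" by blast
  have M: "M \<in> Fbar D" "M \<subseteq> D" "P \<subseteq> M" "1 \<notin> star_f D st M" using MZ unfolding Z_def by auto
  have Msf: "M \<subseteq> star_f D st M" by (rule Fbar_sub_star_f[OF D st M(1)])
  have "star_f D st M \<inter> D \<subseteq> M"
  proof
    fix x assume x: "x \<in> star_f D st M \<inter> D"
    define M' where "M' = {m + d * x | m d. m \<in> M \<and> d \<in> D}"
    have xD: "x \<in> D" using x by blast
    have MM': "M \<subseteq> M'"
    proof
      fix m assume "m \<in> M"
      hence "m = m + 0 * x \<and> m \<in> M \<and> 0 \<in> D" using subringD(1)[OF D] by simp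
      thus "m \<in> M'" unfolding M'_def by blast
    qed
    have M'F: "M' \<in> Fbar D" unfolding Fbar_iff
    proof (intro conjI ballI)
      show "0 \<in> M'" using MM' FbarD(1)[OF M(1)] by blast
      show "M' \<noteq> {0}" using MM' FbarD(1,2)[OF M(1)] by blast
      fix a b assume "a \<in> M'" "b \<in> M'"
      then obtain m d m' d' where a: "a = m + d * x" "m \<in> M" "d \<in> D"
        and b: "b = m' + d' * x" "m' \<in> M" "d' \<in> D" unfolding M'_def by blast
      have "a + b = (m + m') + (d + d') * x" using a b by (simp add: algebra_simps)
      moreover have "m + m' \<in> M" using FbarD(3)[OF M(1) a(2) b(2)] .
      moreover have "d + d' \<in> D" using subringD(3)[OF D a(3) b(3)] .
      ultimately show "a + b \<in> M'" unfolding M'_def by blast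
    next
      fix c a assume c: "c \<in> D" and "a \<in> M'"
      then obtain m d where a: "a = m + d * x" "m \<in> M" "d \<in> D" unfolding M'_def by blast
      have "c * a = c * m + (c * d) * x" using a by (simp add: algebra_simps)
      moreover have "c * m \<in> M" using FbarD(4)[OF M(1) c a(2)] .
      moreover have "c * d \<in> D" using subringD(5)[OF D c a(3)] .
      ultimately show "c * a \<in> M'" unfolding M'_def by blast
    qed
    have M'D: "M' \<subseteq> D"
    proof
      fix a assume "a \<in> M'"
      then obtain m d where a: "a = m + d * x" "m \<in> M" "d \<in> D" unfolding M'_def by blast
      have "m \<in> D" using a M(2) by blast
      thus "a \<in> D" using a subringD(3)[OF D] subringD(5)[OF D a(3) xD] by simp
    qed
    have "1 \<notin> star_f D st M'"
    proof
      assume "1 \<in> star_f D st M'"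
      then obtain F where F: "F \<in> fD D" "F \<subseteq> M'" "1 \<in> st F" unfolding star_f_def by blast
      obtain G where G: "finite G" "F = genset G D" using fD_E[OF F(1)] by blast
      have "x \<in> star_f D st M" using x by blast
      then obtain F1 where F1: "F1 \<in> fD D" "F1 \<subseteq> M" "x \<in> st F1" unfolding star_f_def by blast
      obtain G1 where G1: "finite G1" "F1 = genset G1 D" "F1 \<noteq> {0}" using fD_E[OF F1(1)] by blast
      have "G \<subseteq> F" using genset_supset[OF D, of G] G(2) by simp
      hence GM': "G \<subseteq> M'" using F(2) by (rule subset_trans)
      have "\<forall>g\<in>G. \<exists>m. m \<in> M \<and> (\<exists>d. d \<in> D \<and> g = m + d * x)"
        using GM' unfolding M'_def by blast
      from bchoice[OF this] obtain mg where mg: "\<forall>g\<in>G. mg g \<in> M \<and> (\<exists>d. d \<in> D \<and> g = mg g + d * x)"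
        by blast
      define F2 where "F2 = genset (mg ` G \<union> G1) D"
      have G1F1: "G1 \<subseteq> F1" using genset_supset[OF D, of G1] G1(2) by simp
      have F1F2: "F1 \<subseteq> F2" unfolding F2_def G1(2) by (rule genset_mono) auto
      have "mg ` G \<union> G1 \<subseteq> M" using mg G1F1 F1(2) by blast
      hence F2M: "F2 \<subseteq> M" unfolding F2_def by (rule Fbar_module_sub[OF M(1)])
      have F2n: "F2 \<noteq> {0}"
      proof
        assume "F2 = {0}"
        hence "F1 \<subseteq> {0}" using F1F2 by simp
        moreover have "0 \<in> F1" using FbarD(1)[OF fD_Fbar[OF D F1(1)]] .
        ultimately show False using G1(3) by blast
      qed
      have F2f: "F2 \<in> fD D" unfolding F2_def using G(1) G1(1) F2n unfolding F2_def by (intro fD_I) auto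
      have F2F: "F2 \<in> Fbar D" using fD_Fbar[OF D F2f] .
      have sF2: "st F2 \<in> Fbar D" using semistarD(1)[OF st F2F] .
      have "st F1 \<subseteq> st F2" using semistarD(2)[OF st fD_Fbar[OF D F1(1)] F2F F1F2] .
      hence xs: "x \<in> st F2" using F1(3) by blast
      have "G \<subseteq> st F2"
      proof
        fix g assume g: "g \<in> G"
        then obtain d where d: "d \<in> D" "g = mg g + d * x" using mg by blast
        have "mg g \<in> mg ` G \<union> G1" using g by blast
        hence "mg g \<in> F2" unfolding F2_def by (rule genset_gen[OF D])
        hence a: "mg g \<in> st F2" using semistarD(3)[OF st F2F] by blast
        have b: "d * x \<in> st F2" using FbarD(4)[OF sF2 d(1) xs] .
        show "g \<in> st F2" using FbarD(3)[OF sF2 a b] d(2) by simp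
      qed
      hence "F \<subseteq> st F2" using G(2) Fbar_module_sub[OF sF2] by simp
      hence "st F \<subseteq> st (st F2)" using semistarD(2)[OF st fD_Fbar[OF D F(1)] sF2] by blast
      hence "1 \<in> st F2" using F(3) semistarD(4)[OF st F2F] by blast
      hence "1 \<in> star_f D st M" unfolding star_f_def using F2f F2M by blast
      thus False using M(4) by blast
    qed
    hence "M' \<in> Z" unfolding Z_def using M'F M'D M(3) MM' by blast
    hence "M' = M" using Mmax MM' by blast
    moreover have "x \<in> M'"
    proof -
      have "x = 0 + 1 * x \<and> 0 \<in> M \<and> 1 \<in> D" using FbarD(1)[OF M(1)] subringD(2)[OF D] by simp
      thus ?thesis unfolding M'_def by blast
    qed
    ultimately show "x \<in> M" by simp
  qed
  hence Mq: "quasi_star_f_ideal D st M" unfolding quasi_star_f_ideal_def using M(1,2) Msf by blast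
  have MD: "M \<noteq> D" using Msf M(4) subringD(2)[OF D] by blast
  have "\<forall>J. quasi_star_f_ideal D st J \<and> J \<noteq> D \<and> M \<subseteq> J \<longrightarrow> J = M"
  proof (intro allI impI)
    fix J assume J: "quasi_star_f_ideal D st J \<and> J \<noteq> D \<and> M \<subseteq> J"
    have JJ: "J \<in> Fbar D" "J \<subseteq> D" "star_f D st J \<inter> D = J" using J unfolding quasi_star_f_ideal_def by auto
    have "1 \<notin> J" using quasi_not_one J by blast
    hence "1 \<notin> star_f D st J" using JJ(3) subringD(2)[OF D] by blast
    hence "J \<in> Z" unfolding Z_def using JJ(1,2) J M(3) by blast
    thus "J = M" using Mmax J by blast
  qed
  hence "M \<in> QMax D st" unfolding QMax_def using Mq MD by blast
  thus ?thesis using M(3) by blast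
qed



lemma genset_UNIV:
  assumes "F \<noteq> {0}" "0 \<in> F" shows "genset F UNIV = UNIV"
proof -
  obtain f where f: "f \<in> F" "f \<noteq> 0" using assms by blast
  have "k \<in> genset F UNIV" for k
  proof -
    have "f * (k / f) \<in> genset F UNIV" using genset_single[OF f(1), of "k / f" UNIV] by simp
    thus ?thesis using f(2) by simp
  qed
  thus ?thesis by blast
qed

lemma linked_val_tilde:
  assumes D: "subring D" and K: "quotient_field_is_UNIV D" and st: "semistar D st"
    and T: "star_linked D st T" and V: "valring V" and TV: "T \<subseteq> V"
  shows "star_tilde_valuation_overring D st V"
proof -
  have Tov: "overring D T" and Tl: "\<And>F. F \<in> fD D \<Longrightarrow> F \<subseteq> D \<Longrightarrow> st F = st D \<Longrightarrow> genset F T = T"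
    using T unfolding star_linked_def by auto
  have DT: "D \<subseteq> T" and Tsub: "subring T" using Tov unfolding overring_def by auto
  have DV: "D \<subseteq> V" using DT TV by blast
  have Vsub: "subring V" using V valring_def by auto
  have vo: "valuation_overring D V" using V DV valuation_overring_iff by blast
  define P where "P = mV V \<inter> D"
  have "\<forall>F\<in>fD D. star_tilde D st F \<subseteq> genset F V"
  proof (cases "P = {0}")
    case True
    have "V = UNIV"
    proof -
      have "k \<in> V" for k
      proof -
        obtain a b where ab: "a \<in> D" "b \<in> D" "b \<noteq> 0" "k = a / b" using K unfolding quotient_field_is_UNIV_def by blast
        have "b \<notin> mV V" using True ab unfolding P_def by blast
        hence "inverse b \<in> V" using ab DV unfolding mV_def by auto
        moreover have "a \<in> V" using ab DV by blast
        ultimately have "a * inverse b \<in> V" using subringD(5)[OF Vsub] by blast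
        thus ?thesis using ab by (simp add: divide_inverse)
      qed
      thus ?thesis by blast
    qed
    show ?thesis
    proof
      fix F assume F: "F \<in> fD D"
      have FF: "F \<in> Fbar D" using fD_Fbar[OF D F] .
      have "genset F V = UNIV" unfolding \<open>V = UNIV\<close> using FbarD(1,2)[OF FF] by (intro genset_UNIV) auto
      thus "star_tilde D st F \<subseteq> genset F V" by simp
    qed
  next
    case False
    have P0: "0 \<in> P" using mV_zero[OF V] subringD(1)[OF D] unfolding P_def by blast
    have PD: "P \<subseteq> D" unfolding P_def by blast
    have PF: "P \<in> Fbar D" unfolding Fbar_iff
    proof (intro conjI ballI)
      show "0 \<in> P" by (rule P0)
      show "P \<noteq> {0}" by (rule False)
      fix x y assume "x \<in> P" "y \<in> P"
      thus "x + y \<in> P" unfolding P_def using mV_add[OF V] subringD(3)[OF D] by blast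
    next
      fix d x assume d: "d \<in> D" and x: "x \<in> P"
      have "d \<in> V" using d DV by blast
      thus "d * x \<in> P" unfolding P_def using mV_mult[OF V] subringD(5)[OF D] d x unfolding P_def by blast
    qed
    have P1: "1 \<notin> star_f D st P"
    proof
      assume "1 \<in> star_f D st P"
      then obtain F where F: "F \<in> fD D" "F \<subseteq> P" "1 \<in> st F" unfolding star_f_def by blast
      have FF: "F \<in> Fbar D" using fD_Fbar[OF D F(1)] .
      have FD: "F \<subseteq> D" using F(2) PD by blast
      have "st F = st D" by (rule one_in_st_eq[OF D st FF FD F(3)])
      hence gT: "genset F T = T" using Tl[OF F(1) FD] by blast
      have "genset F T \<subseteq> mV V"
      proof (rule genset_least)
        show "0 \<in> mV V" by (rule mV_zero[OF V])
        show "a + b \<in> mV V" if "a \<in> mV V" "b \<in> mV V" for a b using mV_add[OF V that] .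
        fix e t assume e: "e \<in> F" and t: "t \<in> T"
        have "e \<in> mV V" using e F(2) unfolding P_def by blast
        moreover have "t \<in> V" using t TV by blast
        ultimately have "t * e \<in> mV V" using mV_mult[OF V] by blast
        thus "e * t \<in> mV V" by (simp add: mult.commute)
      qed
      hence "1 \<in> mV V" using gT subringD(2)[OF Tsub] by blast
      thus False using mV_one[OF V] by blast
    qed
    obtain M where M: "M \<in> QMax D st" "P \<subseteq> M" using exists_QMax[OF D st PF PD P1] by blast
    have MF: "M \<in> Fbar D" using M(1) unfolding QMax_def quasi_star_f_ideal_def by blast
    have locV: "localization D M \<subseteq> V"
    proof
      fix y assume "y \<in> localization D M"
      then obtain a s where y: "y = a / s" "a \<in> D" "s \<in> D" "s \<notin> M" unfolding localization_def by blast
      have s0: "s \<noteq> 0" using y FbarD(1)[OF MF] by auto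
      have "s \<notin> mV V" using y M(2) unfolding P_def by blast
      hence "inverse s \<in> V" using y DV s0 unfolding mV_def by auto
      moreover have "a \<in> V" using y DV by blast
      ultimately have "a * inverse s \<in> V" using subringD(5)[OF Vsub] by blast
      thus "y \<in> V" using y by (simp add: divide_inverse)
    qed
    show ?thesis
    proof
      fix F assume F: "F \<in> fD D"
      have "star_tilde D st F \<subseteq> genset F (localization D M)"
        unfolding star_tilde_def using M(1) by blast
      also have "\<dots> \<subseteq> genset F V" using locV by (intro genset_mono) auto
      finally show "star_tilde D st F \<subseteq> genset F V" .
    qed
  qed
  thus ?thesis unfolding star_tilde_valuation_overring_def using vo by blast
qed

theorem corollary4p3:
  fixes D :: "'a::field set" and st :: "'a set \<Rightarrow> 'a set"
  assumes "subring D" and "quotient_field_is_UNIV D" and "semistar D st"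
  shows "star_tilde_dim_v D st = Sup {krull_dim T | T. star_linked D st T}"
proof (rule antisym)
  show "star_tilde_dim_v D st \<le> Sup {krull_dim T | T. star_linked D st T}"
    unfolding star_tilde_dim_v_def
  proof (rule Sup_subset_mono)
    show "{krull_dim V | V. star_tilde_valuation_overring D st V} \<subseteq> {krull_dim T | T. star_linked D st T}"
      using tilde_val_linked[OF assms(1) assms(3)] by blast
  qed
  show "Sup {krull_dim T | T. star_linked D st T} \<le> star_tilde_dim_v D st"
  proof (rule Sup_least)
    fix y assume "y \<in> {krull_dim T | T. star_linked D st T}"
    then obtain T where T: "star_linked D st T" "y = krull_dim T" by blast
    have Tsub: "subring T" using T(1) unfolding star_linked_def overring_def by blast
    show "y \<le> star_tilde_dim_v D st"
      unfolding T(2) krull_dim_def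
    proof (rule Sup_least)
      fix z assume "z \<in> {enat n | n. \<exists>P. (\<forall>i\<le>n. prime_ideal T (P i)) \<and> (\<forall>i<n. P i \<subset> P (Suc i))}"
      then obtain n P where z: "z = enat n" "\<forall>i\<le>n. prime_ideal T (P i)" "\<forall>i<n. P i \<subset> P (Suc i)"
        by blast
      obtain V where V: "valring V" "T \<subseteq> V" "enat n \<le> krull_dim V"
        using val_chain[OF Tsub z(2) z(3)] by blast
      have "star_tilde_valuation_overring D st V"
        by (rule linked_val_tilde[OF assms T(1) V(1) V(2)])
      hence "krull_dim V \<le> star_tilde_dim_v D st" unfolding star_tilde_dim_v_def
        by (intro Sup_upper) blast
      thus "z \<le> star_tilde_dim_v D st" using z(1) V(3) by simp
    qed
  qed
qed


end
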